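(* Let $\mathbf{J}\in\mathbb{R}^{n\times n}$ be a real symmetric matrix with zero diagonal, and let $\alpha,\beta>0$ be such that $\lambda_{\min}(\mathbf{J}+\alpha\mathbf{I})>0$. Let $\{\boldsymbol{x}^{(k)}\}_{k\ge0}$ be the DOCH iterates starting from an arbitrary $\boldsymbol{x}^{(0)}\in\mathbb{R}^n$. Then $\{\boldsymbol{x}^{(k)}\}$ converges to a critical point of $\mathcal{H}$.
   Context: Let $f(\boldsymbol{x})=\frac{\beta}{4}\sum_i x_i^4$, $g(\boldsymbol{x})=\frac12\boldsymbol{x}^\top(\mathbf{J}+\alpha\mathbf{I})\boldsymbol{x}$ and $\mathcal{H}=f-g$ (equivalently $\mathcal{H}(\boldsymbol{x})=\frac{\beta}{4}\sum_i x_i^4-\frac{\alpha}{2}\sum_i x_i^2-\frac12\boldsymbol{x}^\top\mathbf{J}\boldsymbol{x}$). The DOCH iterates are defined by $\boldsymbol{x}^{(k+1)}$ being the minimizer of $F_k(\boldsymbol{x})=f(\boldsymbol{x})-g(\boldsymbol{x}^{(k)})-\nabla g(\boldsymbol{x}^{(k)})^\top(\boldsymbol{x}-\boldsymbol{x}^{(k)})$; explicitly, $\boldsymbol{x}^{(k+1)}=\varphi(\beta^{-1}(\mathbf{J}+\alpha\mathbf{I})\boldsymbol{x}^{(k)})$ with $\varphi$ the componentwise real cube root. A critical point is a point where $\nabla\mathcal{H}=\mathbf{0}$. *)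

theory Defs
  imports "HOL-Analysis.Analysis"
begin

text \<open>Real eigenvalues of a real square matrix, and the minimal eigenvalue
  (meaningful for symmetric matrices, whose eigenvalues are all real).\<close>
definition real_eigenvalue :: "real^'n^'n \<Rightarrow> real \<Rightarrow> bool" where
  "real_eigenvalue A c \<longleftrightarrow> (\<exists>v. v \<noteq> 0 \<and> A *v v = c *\<^sub>R v)"

definition lambda_min :: "real^'n^'n \<Rightarrow> real" where
  "lambda_min A = Min {c. real_eigenvalue A c}"

definition Hfun :: "real^'n^'n \<Rightarrow> real \<Rightarrow> real \<Rightarrow> real^'n \<Rightarrow> real" where
  "Hfun J \<alpha> \<beta> x =
     \<beta> / 4 * (\<Sum>i\<in>UNIV. (x $ i) ^ 4) - \<alpha> / 2 * (\<Sum>i\<in>UNIV. (x $ i) ^ 2)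
     - 1 / 2 * (x \<bullet> (J *v x))"

definition doch_step :: "real^'n^'n \<Rightarrow> real \<Rightarrow> real \<Rightarrow> real^'n \<Rightarrow> real^'n" where
  "doch_step J \<alpha> \<beta> x = (\<chi> i. root 3 ((((J + \<alpha> *\<^sub>R mat 1) *v x) $ i) / \<beta>))"

definition critical_point :: "(real^'n \<Rightarrow> real) \<Rightarrow> real^'n \<Rightarrow> bool" where
  "critical_point H x \<longleftrightarrow> (H has_derivative (\<lambda>h. 0)) (at x)"

end

theory Submission
  imports Defs
begin

definition mnm :: "('n::finite \<Rightarrow> nat) \<Rightarrow> real^'n \<Rightarrow> real" where
  "mnm e x = (\<Prod>i\<in>UNIV. (x$i)^(e i))"

definition ex :: "('n \<Rightarrow> bool) \<times> ('n \<Rightarrow> bool) \<Rightarrow> 'n \<Rightarrow> nat" where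
  "ex m i = of_bool (fst m i) + of_bool (snd m i)"

definition rep :: "(real^'n::finite) set \<Rightarrow> (real^'n \<Rightarrow> real) \<Rightarrow> bool" where
  "rep S f \<longleftrightarrow> (\<exists>w::real^(('n\<Rightarrow>bool)\<times>('n\<Rightarrow>bool)). \<forall>x\<in>S. f x = (\<Sum>m\<in>UNIV. w$m * mnm (ex m) x))"

definition deg :: "('n::finite \<Rightarrow> nat) \<Rightarrow> nat" where
  "deg e = (\<Sum>i\<in>UNIV. e i)"

lemma rep_cong: "(\<And>x. x \<in> S \<Longrightarrow> f x = g x) \<Longrightarrow> rep S g \<Longrightarrow> rep S f"
  unfolding rep_def by auto

lemma rep_add: "rep S f \<Longrightarrow> rep S g \<Longrightarrow> rep S (\<lambda>x. f x + g x)"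
proof -
  assume "rep S f" "rep S g"
  then obtain w w' where w: "\<forall>x\<in>S. f x = (\<Sum>m\<in>UNIV. w$m * mnm (ex m) x)"
    and w': "\<forall>x\<in>S. g x = (\<Sum>m\<in>UNIV. w'$m * mnm (ex m) x)" unfolding rep_def by blast
  show ?thesis unfolding rep_def
    by (rule exI[of _ "w + w'"]) (simp add: w w' algebra_simps sum.distrib)
qed

lemma rep_scale: "rep S f \<Longrightarrow> rep S (\<lambda>x. c * f x)"
proof -
  assume "rep S f"
  then obtain w where w: "\<forall>x\<in>S. f x = (\<Sum>m\<in>UNIV. w$m * mnm (ex m) x)"
    unfolding rep_def by blast
  show ?thesis unfolding rep_def
    by (rule exI[of _ "c *\<^sub>R w"]) (simp add: w sum_distrib_left mult.assoc)
qed

lemma rep_zero: "rep S (\<lambda>x. 0)"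
  unfolding rep_def by (rule exI[of _ 0]) simp

lemma rep_sum: "finite T \<Longrightarrow> (\<And>t. t \<in> T \<Longrightarrow> rep S (f t)) \<Longrightarrow> rep S (\<lambda>x. \<Sum>t\<in>T. f t x)"
proof (induction T rule: finite_induct)
  case empty then show ?case by (simp add: rep_zero)
next
  case (insert a F)
  then show ?case by (simp add: rep_add)
qed

lemma rep_ex: "rep S (mnm (ex m))"
  unfolding rep_def
proof (rule exI[of _ "axis m 1"], intro ballI)
  fix x
  have "(\<Sum>ma\<in>UNIV. axis m 1 $ ma * mnm (ex ma) x) = (\<Sum>ma\<in>UNIV. if ma = m then mnm (ex ma) x else 0)"
    by (rule sum.cong) (auto simp: axis_def)
  then show "mnm (ex m) x = (\<Sum>ma\<in>UNIV. axis m 1 $ ma * mnm (ex ma) x)" by simp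
qed

lemma mnm_upd: "mnm (e(k := e k + d)) x = x$k^d * mnm e x"
proof -
  have "(\<Prod>i\<in>UNIV. (x$i)^((e(k := e k + d)) i)) = (\<Prod>i\<in>UNIV. (if i = k then x$k^d else 1) * (x$i)^(e i))"
    by (rule prod.cong) (auto simp: power_add)
  also have "\<dots> = x$k^d * mnm e x" by (simp add: prod.distrib mnm_def)
  finally show ?thesis by (simp add: mnm_def)
qed

lemma deg_upd: "deg (e(k := e k + d)) = deg e + d"
proof -
  have "(\<Sum>i\<in>UNIV. (e(k := e k + d)) i) = (\<Sum>i\<in>UNIV. (if i = k then d else 0) + e i)"
    by (rule sum.cong) auto
  also have "\<dots> = deg e + d" by (simp add: sum.distrib deg_def)
  finally show ?thesis by (simp add: deg_def)
qed

lemma mnm_add: "mnm (\<lambda>i. e i + e' i) x = mnm e x * mnm e' x"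
  by (simp add: mnm_def power_add prod.distrib)

lemma ex_zero: "ex (\<lambda>_. False, \<lambda>_. False) = (\<lambda>_. 0)"
  by (simp add: ex_def fun_eq_iff)

lemma rep_const: "rep S (\<lambda>x. c)"
proof -
  have "rep S (mnm (ex (\<lambda>_. False, \<lambda>_. False)))" by (rule rep_ex)
  then have "rep S (\<lambda>x. c * mnm (ex (\<lambda>_. False, \<lambda>_. False)) x)" by (rule rep_scale)
  then show ?thesis by (rule rep_cong[rotated]) (simp add: ex_zero mnm_def)
qed

lemma rep_coord: "rep S (\<lambda>x. x$i)"
proof -
  have "rep S (mnm (ex (\<lambda>j. j = i, \<lambda>_. False)))" by (rule rep_ex)
  moreover have "mnm (ex (\<lambda>j. j = i, \<lambda>_. False)) x = x$i" for x
  proof -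
    have "mnm (ex (\<lambda>j. j = i, \<lambda>_. False)) x = (\<Prod>j\<in>UNIV. if j = i then x$i else 1)"
      unfolding mnm_def ex_def by (rule prod.cong) auto
    then show ?thesis by simp
  qed
  ultimately show ?thesis by (metis (no_types) rep_cong)
qed

lemma rep_all_mnm:
  fixes M :: "real^'n::finite^'n"
  assumes b: "b \<noteq> 0"
  shows "rep {p. \<forall>i. b * (p$i)^3 = (M *v p)$i} (mnm e)"
proof (induction "deg e" arbitrary: e rule: less_induct)
  case less
  let ?C = "{p. \<forall>i. b * (p$i)^3 = (M *v p)$i}"
  show ?case
  proof (cases "\<forall>i. e i \<le> 2")
    case True
    have eq: "e = ex (\<lambda>i. 1 \<le> e i, \<lambda>i. 2 \<le> e i)"
    proof
      fix i
      have "e i \<le> 2" using True by blast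
      then show "e i = ex (\<lambda>i. 1 \<le> e i, \<lambda>i. 2 \<le> e i) i"
        unfolding ex_def by (cases "e i"; cases "e i - 1"; auto)
    qed
    show ?thesis by (subst eq) (rule rep_ex)
  next
    case False
    then obtain k where "\<not> e k \<le> 2" by blast
    then have k: "3 \<le> e k" by simp
    define e' where "e' = e(k := e k - 3)"
    have ee: "e = e'(k := e' k + 3)" using k by (auto simp: e'_def fun_eq_iff)
    have dg: "deg e = deg e' + 3" by (subst ee, rule deg_upd)
    have "rep ?C (\<lambda>x. \<Sum>j\<in>UNIV. (M$k$j / b) * mnm (e'(j := e' j + 1)) x)"
    proof (rule rep_sum, simp)
      fix j
      have "deg (e'(j := e' j + 1)) < deg e" using dg deg_upd[of e' j 1] by simp
      then show "rep ?C (\<lambda>x. (M$k$j / b) * mnm (e'(j := e' j + 1)) x)"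
        using less by (intro rep_scale) blast
    qed
    then show ?thesis
    proof (rule rep_cong[rotated])
      fix x assume "x \<in> ?C"
      then have bx: "b * (x$k)^3 = (M *v x)$k" by blast
      have s: "(\<Sum>j\<in>UNIV. (M$k$j / b) * x$j) = (M *v x)$k / b"
        by (simp add: matrix_vector_mult_def sum_divide_distrib mult_ac)
      have x3: "(x$k)^3 = (\<Sum>j\<in>UNIV. (M$k$j / b) * x$j)"
        unfolding s using b by (simp flip: bx)
      have "mnm e x = (x$k)^3 * mnm e' x" by (subst ee, rule mnm_upd)
      also have "\<dots> = (\<Sum>j\<in>UNIV. (M$k$j / b) * (x$j * mnm e' x))"
        by (simp add: x3 sum_distrib_right mult.assoc)
      also have "\<dots> = (\<Sum>j\<in>UNIV. (M$k$j / b) * mnm (e'(j := e' j + 1)) x)"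
        by (rule sum.cong[OF refl]) (simp only: mnm_upd power_one_right)
      finally show "mnm e x = (\<Sum>j\<in>UNIV. (M$k$j / b) * mnm (e'(j := e' j + 1)) x)" .
    qed
  qed
qed

lemma rep_mult:
  assumes all: "\<And>e. rep S (mnm e)" and f: "rep S f" and g: "rep S g"
  shows "rep S (\<lambda>x. f x * g x)"
proof -
  obtain w where w: "\<forall>x\<in>S. f x = (\<Sum>m\<in>UNIV. w$m * mnm (ex m) x)"
    using f unfolding rep_def by blast
  obtain w' where w': "\<forall>x\<in>S. g x = (\<Sum>m\<in>UNIV. w'$m * mnm (ex m) x)"
    using g unfolding rep_def by blast
  have "rep S (\<lambda>x. \<Sum>m\<in>UNIV. \<Sum>m'\<in>UNIV. (w$m * w'$m') * mnm (\<lambda>i. ex m i + ex m' i) x)"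
    by (intro rep_sum rep_scale all) auto
  then show ?thesis
  proof (rule rep_cong[rotated])
    fix x assume "x \<in> S"
    then show "f x * g x = (\<Sum>m\<in>UNIV. \<Sum>m'\<in>UNIV. (w$m * w'$m') * mnm (\<lambda>i. ex m i + ex m' i) x)"
    proof -
      assume x: "x \<in> S"
      have "f x * g x = (\<Sum>m\<in>UNIV. \<Sum>m'\<in>UNIV. (w$m * mnm (ex m) x) * (w'$m' * mnm (ex m') x))"
        using x w w' by (simp add: sum_product)
      also have "\<dots> = (\<Sum>m\<in>UNIV. \<Sum>m'\<in>UNIV. (w$m * w'$m') * mnm (\<lambda>i. ex m i + ex m' i) x)"
        by (simp add: mnm_add mult_ac)
      finally show ?thesis .
    qed
  qed
qed

lemma rep_prod:
  assumes all: "\<And>e. rep S (mnm e)"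
  shows "finite T \<Longrightarrow> (\<And>t. t \<in> T \<Longrightarrow> rep S (f t)) \<Longrightarrow> rep S (\<lambda>x. \<Prod>t\<in>T. f t x)"
proof (induction T rule: finite_induct)
  case empty then show ?case by (simp add: rep_const)
next
  case (insert a F)
  then show ?case by (simp add: rep_mult[OF all])
qed

lemma finite_C:
  fixes M :: "real^'n::finite^'n"
  assumes b: "b \<noteq> 0"
  shows "finite {p. \<forall>i. b * (p$i)^3 = (M *v p)$i}"
proof -
  define C where "C = {p. \<forall>i. b * (p$i)^3 = (M *v p)$i}"
  have all: "\<And>e. rep C (mnm e)" unfolding C_def by (rule rep_all_mnm[OF b])
  have fac: "rep C (\<lambda>x. (x$i - c) / d)" for i c d
  proof -
    have "rep C (\<lambda>x. (1/d) * x$i + (- c/d))" by (intro rep_add rep_scale rep_coord rep_const)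
    then show ?thesis by (rule rep_cong[rotated]) (simp add: diff_divide_distrib)
  qed
  have bound: "card S \<le> CARD(('n\<Rightarrow>bool)\<times>('n\<Rightarrow>bool))" if S: "finite S" "S \<subseteq> C" for S
  proof -
    define ix where "ix a b = (SOME i. a$i \<noteq> b$i)" for a b :: "real^'n"
    have ix: "a$(ix a b) \<noteq> b$(ix a b)" if "a \<noteq> b" for a b
    proof -
      have "\<exists>i. a$i \<noteq> b$i" using that by (simp add: vec_eq_iff)
      then show ?thesis unfolding ix_def by (rule someI_ex)
    qed
    define \<phi> where "\<phi> a x = (\<Prod>b\<in>S-{a}. (x$(ix a b) - b$(ix a b)) / (a$(ix a b) - b$(ix a b)))" for a x
    have "\<forall>a. \<exists>w::real^(('n\<Rightarrow>bool)\<times>('n\<Rightarrow>bool)). \<forall>x\<in>C. \<phi> a x = (\<Sum>m\<in>UNIV. w$m * mnm (ex m) x)"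
    proof
      fix a
      have "rep C (\<phi> a)" unfolding \<phi>_def
        by (rule rep_prod[OF all]) (use S in \<open>auto intro: fac\<close>)
      then show "\<exists>w::real^(('n\<Rightarrow>bool)\<times>('n\<Rightarrow>bool)). \<forall>x\<in>C. \<phi> a x = (\<Sum>m\<in>UNIV. w$m * mnm (ex m) x)"
        unfolding rep_def .
    qed
    then obtain W :: "real^'n \<Rightarrow> real^(('n\<Rightarrow>bool)\<times>('n\<Rightarrow>bool))"
      where W: "\<And>a x. x \<in> C \<Longrightarrow> \<phi> a x = (\<Sum>m\<in>UNIV. W a $m * mnm (ex m) x)" by metis
    define v where "v x = (\<chi> m. mnm (ex m) x)" for x :: "real^'n"
    have wv: "W a \<bullet> v x = \<phi> a x" if "x \<in> C" for a x
      using that by (simp add: inner_vec_def v_def W)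
    have phi1: "\<phi> a a = 1" for a
      unfolding \<phi>_def
    proof (rule prod.neutral, intro ballI)
      fix b assume "b \<in> S - {a}"
      then have "a \<noteq> b" by auto
      then have "a$(ix a b) - b$(ix a b) \<noteq> 0" using ix by simp
      then show "(a$(ix a b) - b$(ix a b)) / (a$(ix a b) - b$(ix a b)) = 1" by simp
    qed
    have phi0: "\<phi> a b = 0" if "b \<in> S" "b \<noteq> a" for a b
    proof -
      have "b \<in> S - {a}" using that by simp
      then show ?thesis unfolding \<phi>_def using S(1) by (subst prod_zero_iff) auto
    qed
    have key: "W a \<bullet> v b = (if a = b then 1 else 0)" if "a \<in> S" "b \<in> S" for a b
      using that S(2) by (auto simp: wv phi1 phi0)
    have inj: "inj_on v S"
    proof (rule inj_onI)
      fix a b assume "a \<in> S" "b \<in> S" "v a = v b"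
      then show "a = b" using key[of a a] key[of a b] by (auto split: if_splits)
    qed
    have ind: "independent (v ` S)"
    proof (rule independent_if_scalars_zero)
      show "finite (v ` S)" using S by simp
      fix f y assume sum0: "(\<Sum>z\<in>v ` S. f z *\<^sub>R z) = 0" and y: "y \<in> v ` S"
      then obtain a where a: "a \<in> S" "y = v a" by blast
      have "0 = W a \<bullet> (\<Sum>z\<in>v ` S. f z *\<^sub>R z)" by (simp add: sum0)
      also have "\<dots> = (\<Sum>z\<in>v ` S. f z * (W a \<bullet> z))" by (simp add: inner_sum_right)
      also have "\<dots> = (\<Sum>c\<in>S. f (v c) * (W a \<bullet> v c))" by (simp add: sum.reindex[OF inj])
      also have "\<dots> = (\<Sum>c\<in>S. if c = a then f (v a) else 0)"
        by (rule sum.cong[OF refl]) (use a in \<open>auto simp: key\<close>)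
      also have "\<dots> = f y" using a S by simp
      finally show "f y = 0" by simp
    qed
    have "card (v ` S) \<le> DIM(real^(('n\<Rightarrow>bool)\<times>('n\<Rightarrow>bool)))"
      using independent_bound[OF ind] by blast
    then show ?thesis using card_image[OF inj] by simp
  qed
  show ?thesis
  proof (rule ccontr)
    assume "\<not> finite {p. \<forall>i. b * (p$i)^3 = (M *v p)$i}"
    then have "infinite C" by (simp add: C_def)
    then obtain S where "finite S" "card S = CARD(('n\<Rightarrow>bool)\<times>('n\<Rightarrow>bool)) + 1" "S \<subseteq> C"
      using infinite_arbitrarily_large by blast
    then show False using bound by fastforce
  qed
qed

lemma sym_dot:
  fixes M :: "real^'n::finite^'n"
  assumes "\<forall>i j. M$i$j = M$j$i"
  shows "x \<bullet> (M *v y) = y \<bullet> (M *v x)"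
proof -
  have "x \<bullet> (M *v y) = (\<Sum>i\<in>UNIV. \<Sum>j\<in>UNIV. x$i * M$i$j * y$j)"
    by (simp add: inner_vec_def matrix_vector_mult_def sum_distrib_left mult.assoc)
  also have "\<dots> = (\<Sum>j\<in>UNIV. \<Sum>i\<in>UNIV. x$i * M$i$j * y$j)" by (rule sum.swap)
  also have "\<dots> = (\<Sum>j\<in>UNIV. \<Sum>i\<in>UNIV. y$j * M$j$i * x$i)"
    using assms by (simp add: mult_ac)
  also have "\<dots> = y \<bullet> (M *v x)"
    by (simp add: inner_vec_def matrix_vector_mult_def sum_distrib_left mult.assoc)
  finally show ?thesis .
qed

lemma Acomp: "((J + \<alpha> *\<^sub>R mat 1) *v x) $ i = (J *v x) $ i + \<alpha> * x $ i"
proof -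
  have "((J + \<alpha> *\<^sub>R mat 1) *v x) $ i = (\<Sum>j\<in>UNIV. J$i$j * x$j + (if j = i then \<alpha> * x$i else 0))"
    unfolding matrix_vector_mult_def by (auto intro!: sum.cong simp: mat_def algebra_simps)
  then show ?thesis by (simp add: sum.distrib matrix_vector_mult_def)
qed

lemma Hfun_alt:
  "Hfun J \<alpha> \<beta> x = \<beta>/4 * (\<Sum>i\<in>UNIV. (x$i)^4) - 1/2 * (x \<bullet> ((J + \<alpha> *\<^sub>R mat 1) *v x))"
proof -
  have "x \<bullet> ((J + \<alpha> *\<^sub>R mat 1) *v x) = x \<bullet> (J *v x) + \<alpha> * (\<Sum>i\<in>UNIV. (x$i)^2)"
    unfolding inner_vec_def by (simp only: Acomp) (simp add: algebra_simps sum.distrib sum_distrib_left power2_eq_square inner_vec_def)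
  then show ?thesis unfolding Hfun_def by (simp add: algebra_simps)
qed

lemma quart: "(\<beta>::real) > 0 \<Longrightarrow> \<beta>/4 * (y^4 - x^4) \<le> \<beta> * y^3 * (y - x)"
proof -
  assume b: "\<beta> > 0"
  have e: "\<beta> * y^3 * (y - x) - \<beta>/4 * (y^4 - x^4) = \<beta>/4 * ((y-x)^2 * (2*y^2 + (x+y)^2))"
    by (simp add: algebra_simps power2_eq_square power3_eq_cube power4_eq_xxxx)
  have "0 \<le> \<beta>/4 * ((y-x)^2 * (2*y^2 + (x+y)^2))" using b by simp
  then show ?thesis using e by linarith
qed

lemma descent:
  fixes A :: "real^'n::finite^'n"
  assumes symA: "\<forall>i j. A$i$j = A$j$i" and b: "\<beta> > 0"
    and y: "\<forall>i. \<beta> * (y$i)^3 = (A *v x)$i"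
  shows "\<beta>/4 * (\<Sum>i\<in>UNIV. (y$i)^4) - 1/2 * (y \<bullet> (A *v y))
     \<le> \<beta>/4 * (\<Sum>i\<in>UNIV. (x$i)^4) - 1/2 * (x \<bullet> (A *v x)) - 1/2 * ((y - x) \<bullet> (A *v (y - x)))"
proof -
  have s1: "\<beta>/4 * (\<Sum>i\<in>UNIV. (y$i)^4) - \<beta>/4 * (\<Sum>i\<in>UNIV. (x$i)^4) \<le> (y - x) \<bullet> (A *v x)"
  proof -
    have "\<beta>/4 * (\<Sum>i\<in>UNIV. (y$i)^4) - \<beta>/4 * (\<Sum>i\<in>UNIV. (x$i)^4) = (\<Sum>i\<in>UNIV. \<beta>/4 * ((y$i)^4 - (x$i)^4))"
      by (simp add: sum_distrib_left sum_subtractf algebra_simps)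
    also have "\<dots> \<le> (\<Sum>i\<in>UNIV. \<beta> * (y$i)^3 * (y$i - x$i))"
      by (rule sum_mono) (rule quart[OF b])
    also have "\<dots> = (y - x) \<bullet> (A *v x)"
      using y by (simp add: inner_vec_def mult_ac)
    finally show ?thesis .
  qed
  have s2: "(y - x) \<bullet> (A *v (y - x)) = y \<bullet> (A *v y) - 2 * (x \<bullet> (A *v y)) + x \<bullet> (A *v x)"
    using sym_dot[OF symA, of x y] by (simp add: matrix_vector_mult_diff_distrib inner_diff_left inner_diff_right)
  have s3: "x \<bullet> (A *v y) = y \<bullet> (A *v x)" by (rule sym_dot[OF symA])
  show ?thesis using s1 s2 s3 by (simp add: inner_diff_left algebra_simps)
qed

lemma step_cube:
  assumes "\<beta> > 0"
  shows "\<beta> * ((doch_step J \<alpha> \<beta> x)$i)^3 = ((J + \<alpha> *\<^sub>R mat 1) *v x)$i"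
  using assms by (simp add: doch_step_def odd_real_root_pow)

lemma crit:
  fixes J :: "real^'n::finite^'n"
  assumes symJ: "\<forall>i j. J$i$j = J$j$i"
    and p: "\<forall>i. \<beta> * (p$i)^3 = ((J + \<alpha> *\<^sub>R mat 1) *v p)$i"
  shows "critical_point (Hfun J \<alpha> \<beta>) p"
  unfolding critical_point_def Hfun_def
  apply (rule has_derivative_eq_rhs)
   apply (rule derivative_eq_intros bounded_linear.has_derivative[OF bounded_linear_vec_nth]
      bounded_linear.has_derivative[OF matrix_vector_mul_bounded_linear] has_derivative_ident refl)+
  apply (rule ext)
  apply simp
proof -
  fix h
  have pi: "\<beta> * (p$i)^3 - \<alpha> * p$i = (J *v p)$i" for i using p Acomp[of J \<alpha> p i] by simp
  have "\<beta> * (\<Sum>i\<in>UNIV. 4 * h $ i * p $ i ^ 3) / 2 - \<alpha> * (\<Sum>i\<in>UNIV. 2 * h $ i * p $ i)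
      = 2 * (\<Sum>i\<in>UNIV. h$i * (\<beta> * (p$i)^3 - \<alpha> * p$i))"
    by (simp add: sum_distrib_left sum_subtractf algebra_simps)
  also have "\<dots> = 2 * (h \<bullet> (J *v p))" by (simp add: pi inner_vec_def)
  also have "\<dots> = p \<bullet> (J *v h) + h \<bullet> (J *v p)" using sym_dot[OF symJ, of p h] by simp
  finally show "\<beta> * (\<Sum>i\<in>UNIV. 4 * h $ i * p $ i ^ 3) / 2 - \<alpha> * (\<Sum>i\<in>UNIV. 2 * h $ i * p $ i) =
         p \<bullet> (J *v h) + h \<bullet> (J *v p)" .
qed

lemma pd:
  fixes A :: "real^'n::finite^'n"
  assumes symA: "\<forall>i j. A$i$j = A$j$i" and lm: "lambda_min A > 0"
  shows "\<exists>c>0. \<forall>u. c * (norm u)^2 \<le> u \<bullet> (A *v u)"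
proof -
  have cont: "continuous_on UNIV (\<lambda>u. u \<bullet> (A *v u))"
  proof -
    have "continuous_on UNIV ((*v) A)" by (rule linear_continuous_on[OF matrix_vector_mul_bounded_linear])
    from continuous_on_inner[OF continuous_on_id this] show ?thesis by simp
  qed
  have ne: "sphere (0::real^'n) 1 \<noteq> {}" by simp
  obtain v where v: "v \<in> sphere 0 1" and vmin: "\<forall>y\<in>sphere 0 1. v \<bullet> (A *v v) \<le> y \<bullet> (A *v y)"
    using continuous_attains_inf[OF compact_sphere ne continuous_on_subset[OF cont subset_UNIV]] by blast
  define c0 where "c0 = v \<bullet> (A *v v)"
  have nv: "norm v = 1" using v by simp
  have qscale: "(t *\<^sub>R u) \<bullet> (A *v (t *\<^sub>R u)) = t^2 * (u \<bullet> (A *v u))" for t u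
    by (simp add: matrix_vector_mult_scaleR power2_eq_square)
  have ge: "c0 * (norm u)^2 \<le> u \<bullet> (A *v u)" for u
  proof (cases "u = 0")
    case True then show ?thesis by simp
  next
    case False
    then have nu: "norm u > 0" by simp
    have "(1 / norm u) *\<^sub>R u \<in> sphere 0 1" using nu by simp
    then have "c0 \<le> (1 / norm u)^2 * (u \<bullet> (A *v u))"
      using vmin qscale[of "1 / norm u" u] unfolding c0_def by metis
    then show ?thesis using nu by (simp add: field_simps power2_eq_square)
  qed
  have eig: "A *v v = c0 *\<^sub>R v"
  proof -
    define w where "w = A *v v - c0 *\<^sub>R v"
    define d where "d = w \<bullet> (A *v v) - c0 * (v \<bullet> w)"
    define K where "K = w \<bullet> (A *v w) - c0 * (w \<bullet> w)"
    have vv: "v \<bullet> v = 1" using nv by (simp add: dot_square_norm)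
    have sv: "v \<bullet> (A *v w) = w \<bullet> (A *v v)" by (rule sym_dot[OF symA])
    have ineq: "0 \<le> 2*t*d + t^2*K" for t
    proof -
      have "c0 * (norm (v + t *\<^sub>R w))^2 \<le> (v + t *\<^sub>R w) \<bullet> (A *v (v + t *\<^sub>R w))" by (rule ge)
      moreover have "(norm (v + t *\<^sub>R w))^2 = 1 + 2 * t * (v \<bullet> w) + t^2 * (w \<bullet> w)"
        by (simp only: power2_norm_eq_inner) (simp add: inner_add_left inner_add_right vv inner_commute power2_eq_square algebra_simps)
      moreover have "(v + t *\<^sub>R w) \<bullet> (A *v (v + t *\<^sub>R w)) = c0 + 2 * t * (w \<bullet> (A *v v)) + t^2 * (w \<bullet> (A *v w))"
        using sv by (simp add: matrix_vector_right_distrib matrix_vector_mult_scaleR inner_add_left inner_add_right c0_def power2_eq_square algebra_simps)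
      ultimately show ?thesis unfolding d_def K_def by (simp add: algebra_simps)
    qed
    have K0: "0 \<le> K" using ge[of w] by (simp add: K_def dot_square_norm)
    define s where "s = 1 / (K + 1)"
    have s0: "s > 0" using K0 by (simp add: s_def)
    have sK: "s * K < 1" using K0 by (simp add: s_def field_simps)
    have "0 \<le> 2*(-s*d)*d + (-s*d)^2*K" by (rule ineq)
    also have "2*(-s*d)*d + (-s*d)^2*K = s * (d^2 * (s*K - 2))" by (simp add: algebra_simps power2_eq_square)
    finally have "0 \<le> d^2 * (s*K - 2)" using s0 by (simp add: zero_le_mult_iff)
    then have "d^2 \<le> 0" using sK by (simp add: zero_le_mult_iff)
    then have "d = 0" by simp
    moreover have "d = w \<bullet> w" unfolding d_def w_def by (simp add: inner_diff_right inner_diff_left inner_commute algebra_simps)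
    ultimately have "w = 0" by simp
    then show ?thesis by (simp add: w_def)
  qed
  define E where "E = {c. real_eigenvalue A c}"
  have c0E: "c0 \<in> E" unfolding E_def real_eigenvalue_def using eig nv by (intro CollectI exI[of _ v]) auto
  have "\<forall>c\<in>E. \<exists>u. u \<noteq> 0 \<and> A *v u = c *\<^sub>R u" unfolding E_def real_eigenvalue_def by blast
  then obtain ev where ev: "\<And>c. c \<in> E \<Longrightarrow> ev c \<noteq> 0 \<and> A *v ev c = c *\<^sub>R ev c" by metis
  have orth: "ev c \<bullet> ev d = 0" if "c \<in> E" "d \<in> E" "c \<noteq> d" for c d
  proof -
    have "c * (ev c \<bullet> ev d) = (A *v ev c) \<bullet> ev d" using ev[OF that(1)] by simp
    also have "\<dots> = ev c \<bullet> (A *v ev d)" using sym_dot[OF symA, of "ev d" "ev c"] by (simp add: inner_commute)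
    also have "\<dots> = d * (ev c \<bullet> ev d)" using ev[OF that(2)] by simp
    finally have "(c - d) * (ev c \<bullet> ev d) = 0" by (simp add: algebra_simps)
    then show ?thesis using that(3) by simp
  qed
  have inj: "inj_on ev E"
  proof (rule inj_onI)
    fix c d assume cd: "c \<in> E" "d \<in> E" "ev c = ev d"
    then have "c *\<^sub>R ev c = d *\<^sub>R ev c" using ev[OF cd(1)] ev[OF cd(2)] by metis
    then show "c = d" using ev[OF cd(1)] by simp
  qed
  have "pairwise orthogonal (ev ` E)"
    unfolding pairwise_def orthogonal_def using orth by fastforce
  moreover have "0 \<notin> ev ` E" using ev by fastforce
  ultimately have "independent (ev ` E)" by (rule pairwise_orthogonal_independent)
  then have "finite (ev ` E)" using independent_bound by blast
  then have "finite E" using finite_image_iff[OF inj] by simp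
  then have "lambda_min A \<le> c0" unfolding lambda_min_def E_def[symmetric] using c0E by simp
  then show ?thesis using ge lm by (intro exI[of _ c0]) auto
qed

lemma conv_finite:
  fixes x :: "nat \<Rightarrow> 'a::{heine_borel,real_normed_vector}"
  assumes bnd: "bounded (range x)" and d: "(\<lambda>k. x (Suc k) - x k) \<longlonglongrightarrow> 0"
    and fin: "finite C"
    and lim: "\<And>r p. strict_mono r \<Longrightarrow> (x \<circ> r) \<longlonglongrightarrow> p \<Longrightarrow> p \<in> C"
  shows "\<exists>p. x \<longlonglongrightarrow> p"
proof -
  have A: "\<exists>N. \<forall>k\<ge>N. \<exists>p\<in>C. dist (x k) p < e" if e: "e > 0" for e
  proof (rule ccontr)
    assume "\<not> (\<exists>N. \<forall>k\<ge>N. \<exists>p\<in>C. dist (x k) p < e)"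
    define T where "T = {k. \<not> (\<exists>p\<in>C. dist (x k) p < e)}"
    have "\<forall>N. \<exists>k\<ge>N. k \<in> T" unfolding T_def using \<open>\<not> (\<exists>N. \<forall>k\<ge>N. \<exists>p\<in>C. dist (x k) p < e)\<close> by auto
    then have "infinite T"
      unfolding infinite_nat_iff_unbounded_le .
    from infinite_enumerate[OF this] obtain r :: "nat \<Rightarrow> nat" where r: "strict_mono r" "\<And>n. r n \<in> T"
      by metis
    have "bounded (range (x \<circ> r))" using bnd by (rule bounded_subset) auto
    then obtain l r' where r': "strict_mono r'" "((x \<circ> r) \<circ> r') \<longlonglongrightarrow> l"
      using bounded_imp_convergent_subsequence by blast
    have "strict_mono (r \<circ> r')" using r(1) r'(1) by (rule strict_mono_o)
    moreover have "(x \<circ> (r \<circ> r')) \<longlonglongrightarrow> l" using r'(2) by (simp add: o_assoc)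
    ultimately have lC: "l \<in> C" by (rule lim)
    have "\<forall>\<^sub>F j in sequentially. dist (((x \<circ> r) \<circ> r') j) l < e" using r'(2) e by (rule tendstoD)
    moreover have "\<not> dist (((x \<circ> r) \<circ> r') j) l < e" for j using r(2)[of "r' j"] lC by (auto simp: T_def)
    ultimately show False by simp
  qed
  define D where "D = (\<lambda>(p, q). dist p q) ` {(p, q). p \<in> C \<and> q \<in> C \<and> p \<noteq> q}"
  have finD: "finite D" unfolding D_def
    by (rule finite_imageI, rule finite_subset[of _ "C \<times> C"]) (auto simp: fin)
  define \<delta> where "\<delta> = (if D = {} then 1 else Min D / 3)"
  have \<delta>0: "\<delta> > 0"
  proof (cases "D = {}")
    case True then show ?thesis by (simp add: \<delta>_def)
  next
    case False
    have "Min D \<in> D" using False finD by simp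
    then have "Min D > 0" unfolding D_def by auto
    then show ?thesis using False by (simp add: \<delta>_def)
  qed
  have sep: "3 * \<delta> \<le> dist p q" if "p \<in> C" "q \<in> C" "p \<noteq> q" for p q
  proof -
    have "dist p q \<in> D" unfolding D_def using that by force
    then show ?thesis unfolding \<delta>_def using finD by auto
  qed
  have B: "\<exists>p\<in>C. \<exists>N. \<forall>k\<ge>N. dist (x k) p < e" if e: "e > 0" "e \<le> \<delta>" for e
  proof -
    obtain N1 where N1: "\<forall>k\<ge>N1. \<exists>p\<in>C. dist (x k) p < e" using A e by blast
    obtain N2 where N2: "\<forall>k\<ge>N2. norm (x (Suc k) - x k) < e"
      using d e(1) unfolding lim_sequentially by (auto simp: dist_norm)
    define N where "N = max N1 N2"
    have "N \<ge> N1" by (simp add: N_def)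
    then obtain p where p: "p \<in> C" "dist (x N) p < e" using N1 by blast
    have "dist (x k) p < e" if "k \<ge> N" for k
      using that
    proof (induction k rule: dec_induct)
      case base then show ?case using p by simp
    next
      case (step k)
      have "Suc k \<ge> N1" using step(1) by (simp add: N_def)
      then obtain q where q: "q \<in> C" "dist (x (Suc k)) q < e" using N1 by blast
      have "norm (x (Suc k) - x k) < e" using N2 step(1) by (auto simp: N_def)
      then have "dist (x k) (x (Suc k)) < e" by (simp add: dist_norm norm_minus_commute)
      then have "dist p q < 3 * \<delta>" using step(3) q(2) e(2)
        by (smt (verit) dist_commute dist_triangle)
      then have "p = q" using sep p(1) q(1) by force
      then show ?case using q by simp
    qed
    then show ?thesis using p by blast
  qed
  obtain p0 N0 where p0: "p0 \<in> C" "\<forall>k\<ge>N0. dist (x k) p0 < \<delta>" using B[of \<delta>] \<delta>0 by blast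
  have "x \<longlonglongrightarrow> p0"
    unfolding lim_sequentially
  proof (intro allI impI)
    fix e :: real assume e: "e > 0"
    obtain p' N' where p': "p' \<in> C" "\<forall>k\<ge>N'. dist (x k) p' < min e \<delta>"
      using B[of "min e \<delta>"] e \<delta>0 by auto
    define k where "k = max N0 N'"
    have "dist (x k) p0 < \<delta>" "dist (x k) p' < \<delta>" using p0 p' by (auto simp: k_def)
    then have "dist p0 p' < 3 * \<delta>" using \<delta>0 by (smt (verit) dist_commute dist_triangle)
    then have "p' = p0" using sep p0(1) p'(1) by force
    then show "\<exists>N. \<forall>n\<ge>N. dist (x n) p0 < e" using p' by auto
  qed
  then show ?thesis by blast
qed

lemma sq_lemma:
  fixes t M K \<beta> :: real
  assumes b: "\<beta> > 0" and K: "K > 0" and h: "\<beta>/4 * t^4 - K/2 * t^2 \<le> M"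
  shows "t^2 \<le> 4*K/\<beta> + 8*\<bar>M\<bar>/\<beta> + 1"
proof -
  define s where "s = t^2"
  have s0: "s \<ge> 0" by (simp add: s_def)
  have t4: "t^4 = s^2" unfolding s_def using power_mult[of t 2 2] by simp
  have h': "\<beta>/4 * s^2 - K/2 * s \<le> M" using h by (simp only: t4 s_def[symmetric])
  have p1: "0 \<le> 4*K/\<beta>" "0 \<le> 8*\<bar>M\<bar>/\<beta>" using b K by auto
  show ?thesis
  proof (cases "s \<le> 4*K/\<beta>")
    case True then show ?thesis using p1 s_def by simp
  next
    case False
    then have "K < \<beta> * s / 4" using b by (simp add: field_simps)
    then have k4: "K * 4 \<le> \<beta> * s" by simp
    have "K * 4 * s \<le> \<beta> * s * s" using mult_right_mono[OF k4 s0] .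
    moreover have "K/2 * s = (K * 4 * s) / 8" "\<beta>/8 * s^2 = (\<beta> * s * s) / 8" by (simp_all add: power2_eq_square)
    ultimately have "K/2 * s \<le> \<beta>/8 * s^2" by linarith
    then have "\<beta>/8 * s^2 \<le> M" using h' by simp
    then have "s^2 \<le> 8*M/\<beta>" using b by (simp add: field_simps)
    also have "\<dots> \<le> 8*\<bar>M\<bar>/\<beta>" using b by (simp add: divide_right_mono)
    finally have s2: "s^2 \<le> 8*\<bar>M\<bar>/\<beta>" .
    have "s \<le> s^2 + 1"
    proof (cases "s \<le> 1")
      case True
      moreover have "0 \<le> s^2" by simp
      ultimately show ?thesis by linarith
    next
      case False then have "s * 1 \<le> s * s" using s0 by (intro mult_left_mono) auto
      then show ?thesis by (simp add: power2_eq_square)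
    qed
    then show ?thesis using s2 p1 s_def by simp
  qed
qed

lemma abs_le_sq: "\<bar>t::real\<bar> \<le> t^2 + 1"
proof -
  have "0 \<le> (\<bar>t\<bar> - 1)^2" by simp
  then have "0 \<le> t^2 - 2*\<bar>t\<bar> + 1" by (simp add: power2_eq_square algebra_simps)
  moreover have "0 \<le> t^2" by simp
  ultimately show ?thesis by linarith
qed

theorem theoremS2:
  fixes J :: "real^'n^'n" and \<alpha> \<beta> :: real and x :: "nat \<Rightarrow> real^'n"
  assumes symJ: "transpose J = J"
    and diag0: "\<forall>i. J $ i $ i = 0"
    and alpha_pos: "\<alpha> > 0" and beta_pos: "\<beta> > 0"
    and lmin: "lambda_min (J + \<alpha> *\<^sub>R mat 1) > 0"
    and iter: "\<forall>k. x (Suc k) = doch_step J \<alpha> \<beta> (x k)"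
  shows "\<exists>xs. x \<longlonglongrightarrow> xs \<and> critical_point (Hfun J \<alpha> \<beta>) xs"
proof -
  define A where "A = J + \<alpha> *\<^sub>R mat 1"
  have symJ': "\<forall>i j. J$i$j = J$j$i"
  proof (intro allI)
    fix i j
    have "(transpose J)$i$j = J$j$i" by (simp add: transpose_def)
    then show "J$i$j = J$j$i" using symJ by simp
  qed
  have symA: "\<forall>i j. A$i$j = A$j$i" using symJ' by (simp add: A_def mat_def)
  have lmA: "lambda_min A > 0" using lmin by (simp add: A_def)
  obtain c where c: "c > 0" "\<forall>u. c * (norm u)^2 \<le> u \<bullet> (A *v u)" using pd[OF symA lmA] by blast
  define G where "G u = \<beta>/4 * (\<Sum>i\<in>UNIV. (u$i)^4) - 1/2 * (u \<bullet> (A *v u))" for u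
  have HG: "Hfun J \<alpha> \<beta> u = G u" for u by (simp add: Hfun_alt G_def A_def)
  have cube: "\<beta> * (x (Suc k) $ i)^3 = (A *v x k)$i" for k i
    using step_cube[OF beta_pos] iter by (simp add: A_def)
  have dec: "G (x (Suc k)) \<le> G (x k) - c/2 * (norm (x (Suc k) - x k))^2" for k
  proof -
    have "G (x (Suc k)) \<le> G (x k) - 1/2 * ((x (Suc k) - x k) \<bullet> (A *v (x (Suc k) - x k)))"
      unfolding G_def by (rule descent[OF symA beta_pos]) (simp add: cube)
    moreover have "c * (norm (x (Suc k) - x k))^2 \<le> (x (Suc k) - x k) \<bullet> (A *v (x (Suc k) - x k))"
      using c(2) by blast
    ultimately show ?thesis by linarith
  qed
  obtain K where K: "K > 0" "\<And>u. norm (A *v u) \<le> norm u * K"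
    using bounded_linear.pos_bounded[OF matrix_vector_mul_bounded_linear, of A] by blast
  have term_lb: "-(K^2/(4*\<beta>)) \<le> \<beta>/4 * t^4 - K/2 * t^2" for t :: real
  proof -
    have "\<beta>/4 * t^4 - K/2 * t^2 + K^2/(4*\<beta>) = (\<beta> * t^2 - K)^2 / (4*\<beta>)"
      using beta_pos by (simp add: field_simps power2_eq_square power4_eq_xxxx)
    moreover have "0 \<le> (\<beta> * t^2 - K)^2 / (4*\<beta>)" using beta_pos by simp
    ultimately show ?thesis by linarith
  qed
  have GT: "(\<Sum>i\<in>UNIV. \<beta>/4 * (u$i)^4 - K/2 * (u$i)^2) \<le> G u" for u
  proof -
    have n2: "(norm u)^2 = (\<Sum>i\<in>UNIV. (u$i)^2)"
      by (simp only: power2_norm_eq_inner) (simp add: inner_vec_def power2_eq_square)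
    have "u \<bullet> (A *v u) \<le> norm u * norm (A *v u)" by (rule norm_cauchy_schwarz)
    also have "\<dots> \<le> norm u * (norm u * K)" using K(2) by (simp add: mult_left_mono)
    also have "\<dots> = K * (norm u)^2" by (simp add: power2_eq_square)
    also have "\<dots> = K * (\<Sum>i\<in>UNIV. (u$i)^2)" by (simp only: n2)
    finally have q: "u \<bullet> (A *v u) \<le> K * (\<Sum>i\<in>UNIV. (u$i)^2)" .
    have "(\<Sum>i\<in>UNIV. \<beta>/4 * (u$i)^4 - K/2 * (u$i)^2) = \<beta>/4 * (\<Sum>i\<in>UNIV. (u$i)^4) - K/2 * (\<Sum>i\<in>UNIV. (u$i)^2)"
      by (simp add: sum_subtractf sum_distrib_left)
    then show ?thesis using q unfolding G_def by linarith
  qed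
  define L where "L = real CARD('n) * (K^2/(4*\<beta>))"
  have L0: "0 \<le> L" using beta_pos by (simp add: L_def)
  have Glow: "-L \<le> G u" for u
  proof -
    have "(\<Sum>i\<in>(UNIV::'n set). -(K^2/(4*\<beta>))) \<le> (\<Sum>i\<in>UNIV. \<beta>/4 * (u$i)^4 - K/2 * (u$i)^2)"
      by (rule sum_mono) (rule term_lb)
    then show ?thesis using GT[of u] by (simp add: L_def)
  qed
  have Gmono: "G (x k) \<le> G (x 0)" for k
  proof (induction k)
    case 0 then show ?case by simp
  next
    case (Suc k)
    have "0 \<le> c/2 * (norm (x (Suc k) - x k))^2" using c by simp
    then show ?case using dec[of k] Suc by linarith
  qed
  have tele: "(\<Sum>k<N. c/2 * (norm (x (Suc k) - x k))^2) \<le> G (x 0) - G (x N)" for N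
  proof (induction N)
    case 0 then show ?case by simp
  next
    case (Suc N)
    then show ?case using dec[of N] by simp
  qed
  have summ: "summable (\<lambda>k. c/2 * (norm (x (Suc k) - x k))^2)"
  proof (rule summableI_nonneg_bounded[where x="G (x 0) + L"])
    show "0 \<le> c/2 * (norm (x (Suc k) - x k))^2" for k using c by simp
    show "(\<Sum>k<N. c/2 * (norm (x (Suc k) - x k))^2) \<le> G (x 0) + L" for N
      using tele[of N] Glow[of "x N"] by linarith
  qed
  have "(\<lambda>k. c/2 * (norm (x (Suc k) - x k))^2) \<longlonglongrightarrow> 0" by (rule summable_LIMSEQ_zero[OF summ])
  then have "(\<lambda>k. (2/c) * (c/2 * (norm (x (Suc k) - x k))^2)) \<longlonglongrightarrow> (2/c) * 0" by (rule tendsto_mult_left)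
  then have "(\<lambda>k. (norm (x (Suc k) - x k))^2) \<longlonglongrightarrow> 0" using c by simp
  then have "(\<lambda>k. sqrt ((norm (x (Suc k) - x k))^2)) \<longlonglongrightarrow> sqrt 0" by (rule tendsto_real_sqrt)
  then have "(\<lambda>k. norm (x (Suc k) - x k)) \<longlonglongrightarrow> 0" by simp
  then have dlim: "(\<lambda>k. x (Suc k) - x k) \<longlonglongrightarrow> 0" by (simp add: tendsto_norm_zero_iff)
  define Mb where "Mb = G (x 0) + L"
  have comp_bound: "\<beta>/4 * (x k $ i)^4 - K/2 * (x k $ i)^2 \<le> Mb" for k i
  proof -
    define T where "T j = \<beta>/4 * (x k $ j)^4 - K/2 * (x k $ j)^2" for j
    have split: "(\<Sum>j\<in>UNIV. T j) = T i + (\<Sum>j\<in>UNIV-{i}. T j)" by (simp add: sum.remove)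
    have "(\<Sum>j\<in>UNIV-{i}. -(K^2/(4*\<beta>))) \<le> (\<Sum>j\<in>UNIV-{i}. T j)"
      unfolding T_def by (rule sum_mono) (rule term_lb)
    moreover have "(\<Sum>j\<in>UNIV-{i}. -(K^2/(4*\<beta>))) = - (real (card (UNIV - {i} :: 'n set)) * (K^2/(4*\<beta>)))"
      by simp
    moreover have "real (card (UNIV - {i} :: 'n set)) * (K^2/(4*\<beta>)) \<le> L"
    proof -
      have "card (UNIV - {i} :: 'n set) \<le> CARD('n)" by (rule card_mono) auto
      then show ?thesis unfolding L_def using beta_pos by (intro mult_right_mono) auto
    qed
    ultimately have "-L \<le> (\<Sum>j\<in>UNIV-{i}. T j)" by linarith
    moreover have "(\<Sum>j\<in>UNIV. T j) \<le> G (x k)" unfolding T_def by (rule GT)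
    ultimately have "T i \<le> G (x k) + L" using split by linarith
    then show ?thesis using Gmono[of k] unfolding T_def Mb_def by linarith
  qed
  define R where "R = 4*K/\<beta> + 8*\<bar>Mb\<bar>/\<beta> + 1"
  have cb: "\<bar>x k $ i\<bar> \<le> R + 1" for k i
    using sq_lemma[OF beta_pos K(1) comp_bound[of k i]] abs_le_sq[of "x k $ i"] unfolding R_def by linarith
  have bnd: "bounded (range x)"
    unfolding bounded_iff
  proof (intro exI ballI)
    fix y assume "y \<in> range x"
    then obtain k where y: "y = x k" by blast
    have "norm y \<le> (\<Sum>i\<in>UNIV. \<bar>y $ i\<bar>)" by (rule norm_le_l1_cart)
    also have "\<dots> \<le> (\<Sum>i\<in>(UNIV::'n set). R + 1)" using cb y by (intro sum_mono) auto
    finally show "norm y \<le> real CARD('n) * (R + 1)" by simp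
  qed
  define C where "C = {p. \<forall>i. \<beta> * (p$i)^3 = (A *v p)$i}"
  have finC: "finite C" unfolding C_def using beta_pos by (intro finite_C) simp
  have lim: "p \<in> C" if r: "strict_mono r" and xr: "(x \<circ> r) \<longlonglongrightarrow> p" for r p
  proof -
    have xr': "(\<lambda>j. x (r j)) \<longlonglongrightarrow> p" using xr by (simp add: o_def)
    have d': "(\<lambda>j. x (Suc (r j)) - x (r j)) \<longlonglongrightarrow> 0"
      using LIMSEQ_subseq_LIMSEQ[OF dlim r] by (simp add: o_def)
    have "(\<lambda>j. x (r j) + (x (Suc (r j)) - x (r j))) \<longlonglongrightarrow> p + 0" by (rule tendsto_add[OF xr' d'])
    then have xs: "(\<lambda>j. x (Suc (r j))) \<longlonglongrightarrow> p" by simp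
    have Axr: "(\<lambda>j. A *v x (r j)) \<longlonglongrightarrow> A *v p"
      by (rule bounded_linear.tendsto[OF matrix_vector_mul_bounded_linear xr'])
    show ?thesis unfolding C_def
    proof (intro CollectI allI)
      fix i
      have l1: "(\<lambda>j. x (Suc (r j)) $ i) \<longlonglongrightarrow> p $ i" by (rule tendsto_vec_nth[OF xs])
      have "(\<lambda>j. (A *v x (r j))$i) \<longlonglongrightarrow> (A *v p)$i" by (rule tendsto_vec_nth[OF Axr])
      then have "(\<lambda>j. (A *v x (r j))$i / \<beta>) \<longlonglongrightarrow> (A *v p)$i / \<beta>"
        using beta_pos by (intro tendsto_divide tendsto_const) auto
      then have l2: "(\<lambda>j. root 3 ((A *v x (r j))$i / \<beta>)) \<longlonglongrightarrow> root 3 ((A *v p)$i / \<beta>)"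
        by (rule tendsto_real_root)
      have eq: "x (Suc (r j)) $ i = root 3 ((A *v x (r j))$i / \<beta>)" for j
        using iter by (simp add: doch_step_def A_def)
      have "p $ i = root 3 ((A *v p)$i / \<beta>)"
        using LIMSEQ_unique[OF l1] l2 unfolding eq by blast
      then have "(p $ i)^3 = (A *v p)$i / \<beta>" by (simp add: odd_real_root_pow)
      then show "\<beta> * (p$i)^3 = (A *v p)$i" using beta_pos by simp
    qed
  qed
  have "\<exists>p. x \<longlonglongrightarrow> p"
  proof (rule conv_finite[OF bnd dlim finC])
    fix r :: "nat \<Rightarrow> nat" and p assume "strict_mono r" "(x \<circ> r) \<longlonglongrightarrow> p"
    then show "p \<in> C" by (rule lim)
  qed
  then obtain p where xp: "x \<longlonglongrightarrow> p" by blast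
  have "p \<in> C" using lim[of id p] xp by (simp add: strict_mono_def)
  then have "critical_point (Hfun J \<alpha> \<beta>) p"
    by (intro crit[OF symJ']) (simp add: C_def A_def)
  then show ?thesis using xp by blast
qed

end
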